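(* Let $n\ge2$ and let $Q$ be the $2n\times 2n$ matrix with entries given by $Q_{ij}=0$ if $i+j<2n+1$, $Q_{ij}=q^{n(n+e-3)-e}(q-1+\delta_{i+j,2n+1})q^j$ if $i+j\ge 2n+1$ and $j\le n$, and $Q_{ij}=q^{n(n+e-3)-e}\big((q-1+\delta_{i+j,2n+1})q^{j+e-1}+\delta_{ij}q^n(q^e-q)\big)$ if $i+j\ge2n+1$ and $j>n$ (the quotient matrix of the opposition graph on maximal flags of $\mathrm{PS}(n,e,q)$ with respect to types relative to a fixed point). For $i\in[n]$ let $$v_i=(\underbrace{0,\dots,0}_{n-i},\underbrace{q^{e+i-1},\dots,q^{e+i-1}}_{i},\underbrace{-1,\dots,-1}_{i},\underbrace{0,\dots,0}_{n-i})^\top.$$ Then $v_i$ is an eigenvector of $Q$ with eigenvalue $-q^{(n-1)(n-1+e)}$.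
   Context: $\delta$ is the Kronecker delta; $e$ is a real parameter (in applications $e\in\{0,\frac12,1,\frac32,2\}$) and $q$ a prime power. *)

theory Defs
  imports "Jordan_Normal_Form.Char_Poly" "HOL-Computational_Algebra.Primes"
begin

definition kdelta :: "nat \<Rightarrow> nat \<Rightarrow> real" where
  "kdelta a b = (if a = b then 1 else 0)"

text \<open>The 2n x 2n quotient matrix Q. JNF matrices are 0-indexed, so the entry
  at position (a,b) is Q_{ij} with i = a+1, j = b+1.\<close>
definition Qmat :: "nat \<Rightarrow> real \<Rightarrow> real \<Rightarrow> real mat" where
  "Qmat n e q = mat (2*n) (2*n) (\<lambda>(a,b).
     let i = a + 1; j = b + 1;
         C = q powr (real n * (real n + e - 3) - e);
         d = kdelta (i + j) (2*n + 1)
     in if i + j < 2*n + 1 then 0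
        else if j \<le> n then C * ((q - 1 + d) * q ^ j)
        else C * ((q - 1 + d) * q powr (real j + e - 1)
                  + kdelta i j * q ^ n * (q powr e - q)))"

definition vvec :: "nat \<Rightarrow> real \<Rightarrow> real \<Rightarrow> nat \<Rightarrow> real vec" where
  "vvec n e q i = vec (2*n) (\<lambda>a.
     let k = a + 1
     in if k \<le> n - i then 0
        else if k \<le> n then q powr (e + real i - 1)
        else if k \<le> n + i then -1
        else 0)"

end

theory Submission imports Defs begin

lemma geo:
  fixes q c :: real
  assumes "q > 0" "lo \<le> hi"
  shows "(\<Sum>b\<in>{lo..<hi}. if s \<le> b then (q - 1 + kdelta b s) * q powr (real b + c) else 0)
       = (if s < lo then q powr (real hi + c) - q powr (real lo + c)
          else if s < hi then q powr (real hi + c) else 0)"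
  using assms(2)
proof (induction hi rule: dec_induct)
  case base
  then show ?case by simp
next
  case (step m)
  have e: "q powr (real (Suc m) + c) = q * q powr (real m + c)"
    using assms(1) by (simp add: powr_add add.commute add.left_commute)
  show ?case using step e
    by (auto simp: kdelta_def algebra_simps)
qed


lemma comp:
  fixes n t :: nat and e q :: real
  assumes q: "q > 0" and t: "1 \<le> t" "t \<le> n" and a: "a < 2*n"
  defines "C \<equiv> q powr (real n * (real n + e - 3) - e)"
  defines "A \<equiv> q powr (e + real t - 1)"
  defines "s \<equiv> 2*n - 1 - a"
  shows "(\<Sum>b<2*n. Qmat n e q $$ (a,b) * vvec n e q t $ b)
     = C * A * (if s < n-t then q powr (real n + 1) - q powr (real (n-t) + 1)
          else if s < n then q powr (real n + 1) else 0)
       - C * ((if s < n then q powr (real (n+t) + e) - q powr (real n + e)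
          else if s < n+t then q powr (real (n+t) + e) else 0)
          + (if a \<in> {n..<n+t} then q^n * (q powr e - q) else 0))"
proof -
  let ?f = "\<lambda>b. Qmat n e q $$ (a,b) * vvec n e q t $ b"
  have sp: "{..<2*n} = {0..<2*n}" by auto
  have S: "sum ?f {..<2*n} = sum ?f {0..<n-t} + sum ?f {n-t..<n} + sum ?f {n..<n+t} + sum ?f {n+t..<2*n}"
    unfolding sp using t by (simp add: sum.atLeastLessThan_concat)
  have z1: "sum ?f {0..<n-t} = 0"
    by (rule sum.neutral) (auto simp: vvec_def)
  have z4: "sum ?f {n+t..<2*n} = 0"
    by (rule sum.neutral) (auto simp: vvec_def)
  have p2: "sum ?f {n-t..<n} = C * A * (\<Sum>b\<in>{n-t..<n}. if s \<le> b then (q - 1 + kdelta b s) * q powr (real b + 1) else 0)"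
    unfolding sum_distrib_left
  proof (rule sum.cong)
    fix b assume b: "b \<in> {n-t..<n}"
    have pw: "q ^ (b+1) = q powr (real b + 1)" using q by (simp add: powr_realpow[symmetric] powr_add)
    have kd: "kdelta (a + 1 + (b + 1)) (2 * n + 1) = kdelta b s" unfolding kdelta_def s_def using a b by auto
    show "?f b = C * A * (if s \<le> b then (q - 1 + kdelta b s) * q powr (real b + 1) else 0)"
      using b a t kd pw unfolding C_def A_def s_def by (auto simp: vvec_def Qmat_def Let_def)
  qed simp
  have p3: "sum ?f {n..<n+t} = - (C * ((\<Sum>b\<in>{n..<n+t}. if s \<le> b then (q - 1 + kdelta b s) * q powr (real b + e) else 0)
     + (\<Sum>b\<in>{n..<n+t}. if a = b then q^n * (q powr e - q) else 0)))"
    unfolding sum_distrib_left sum.distrib[symmetric] sum_negf[symmetric]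
  proof (rule sum.cong)
    fix b assume b: "b \<in> {n..<n+t}"
    have pw: "real (b+1) + e - 1 = real b + e" by simp
    have kd: "kdelta (a + 1 + (b + 1)) (2 * n + 1) = kdelta b s" unfolding kdelta_def s_def using a b by auto
    have kd2: "kdelta (a+1) (b+1) = (if a = b then 1 else 0)" by (simp add: kdelta_def)
    show "?f b = - (C * ((if s \<le> b then (q - 1 + kdelta b s) * q powr (real b + e) else 0) + (if a = b then q^n * (q powr e - q) else 0)))"
      using b a t kd kd2 pw unfolding C_def A_def s_def by (auto simp: vvec_def Qmat_def Let_def algebra_simps)
  qed simp
  
  have d: "(\<Sum>b\<in>{n..<n+t}. if a = b then q^n * (q powr e - q) else 0) = (if a \<in> {n..<n+t} then q^n * (q powr e - q) else 0)"
    by (rule sum.delta') simp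
  have g1: "real (n - t) \<le> real n" by simp
  show ?thesis
    unfolding S z1 z4 p2 p3 d geo[OF q, of "n-t" n s 1, simplified] geo[OF q, of n "n+t" s e, simplified]
    by simp
qed

lemma alg1:
  fixes c a x p r w u :: real
  shows "w = r - u \<Longrightarrow> c*a*x - c*(p - r + w) = c*(a*x) - c*p + c*u"
  by (erule ssubst) (simp add: algebra_simps)

theorem mainTheorem9:
  fixes n :: nat and e :: real and q :: nat and i :: nat
  assumes "n \<ge> 2"
    and "\<exists>p k. prime p \<and> k \<ge> 1 \<and> q = p ^ k"
    and "1 \<le> i" and "i \<le> n"
  shows "eigenvector (Qmat n e (real q)) (vvec n e (real q) i)
           (- (real q powr (real (n - 1) * (real n - 1 + e))))"
proof -
  obtain p k where pk: "prime p" "k \<ge> 1" "q = p ^ k" using assms(2) by blast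
  have "p > 0" using pk(1) prime_gt_0_nat by blast
  hence "q > 0" using pk(3) by simp
  hence qp: "real q > 0" by simp
  define Q where "Q = real q"
  have Qp: "Q > 0" using qp Q_def by simp
  define N where "N = real n"
  define T where "T = real i"
  define C where "C = Q powr (N * (N + e - 3) - e)"
  define A where "A = Q powr (e + T - 1)"
  define L where "L = Q powr (real (n - 1) * (real n - 1 + e))"
  have n1: "real (n - 1) = N - 1" using assms(1) N_def by simp
  have L': "L = Q powr ((N - 1) * (N - 1 + e))" unfolding L_def n1 N_def by simp
  have i1: "A * Q powr (N + 1) = Q powr (N + T + e)" unfolding A_def by (simp add: powr_add[symmetric] algebra_simps)
  have i2: "A * Q powr (real (n - i) + 1) = Q powr (N + e)" unfolding A_def using assms(4)
    by (simp add: powr_add[symmetric] of_nat_diff N_def T_def add.commute)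
  have i3: "Q ^ n * Q powr e = Q powr (N + e)" using Qp by (simp add: powr_add powr_realpow N_def)
  have i4: "Q ^ n * Q = Q powr (N + 1)" using Qp by (simp add: powr_add powr_realpow N_def)
  have i5: "C * Q powr (N + T + e) = L * A" unfolding C_def L' A_def powr_add[symmetric]
    by (rule arg_cong[where f="\<lambda>x. Q powr x"]) (simp add: algebra_simps)
  have i6: "C * Q powr (N + 1) = L" unfolding C_def L' powr_add[symmetric]
    by (rule arg_cong[where f="\<lambda>x. Q powr x"]) (simp add: algebra_simps)
  have dimQ: "dim_row (Qmat n e Q) = 2*n" "dim_col (Qmat n e Q) = 2*n" by (simp_all add: Qmat_def)
  have dimv: "dim_vec (vvec n e Q i) = 2*n" by (simp add: vvec_def)
  have comp_eq: "(\<Sum>b<2*n. Qmat n e Q $$ (a,b) * vvec n e Q i $ b) = (- L) * vvec n e Q i $ a"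
    if a: "a < 2*n" for a
  proof -
    have c: "(\<Sum>b<2*n. Qmat n e Q $$ (a,b) * vvec n e Q i $ b)
     = C * A * (if 2*n-1-a < n-i then Q powr (N + 1) - Q powr (real (n-i) + 1)
          else if 2*n-1-a < n then Q powr (N + 1) else 0)
       - C * ((if 2*n-1-a < n then Q powr (real (n+i) + e) - Q powr (N + e)
          else if 2*n-1-a < n+i then Q powr (real (n+i) + e) else 0)
          + (if a \<in> {n..<n+i} then Q^n * (Q powr e - Q) else 0))"
      using comp[OF Qp assms(3,4) a, where e=e] unfolding C_def A_def N_def T_def by simp
    have ni: "real (n+i) + e = N + T + e" by (simp add: N_def T_def)
    have v: "vvec n e Q i $ a = (if a + 1 \<le> n - i then 0 else if a + 1 \<le> n then A
        else if a + 1 \<le> n + i then -1 else 0)"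
      using a unfolding vvec_def A_def T_def by (simp add: add.commute)
    show ?thesis
    proof (cases "a + 1 \<le> n - i")
      case True
      have h: "\<not> (2*n-1-a < n-i)" "\<not> (2*n-1-a < n)" "\<not> (2*n-1-a < n+i)" "a \<notin> {n..<n+i}"
        using True assms(3,4) a by auto
      show ?thesis unfolding c v by (simp only: if_not_P[OF h(1)] if_not_P[OF h(2)] if_not_P[OF h(3)] if_not_P[OF h(4)] if_P[OF True]) simp
    next
      case F1: False
      show ?thesis
      proof (cases "a + 1 \<le> n")
        case True
        have h: "\<not> (2*n-1-a < n-i)" "\<not> (2*n-1-a < n)" "2*n-1-a < n+i" "a \<notin> {n..<n+i}"
          using True F1 assms(3,4) a by auto
        show ?thesis unfolding c v ni by (simp only: if_not_P[OF h(1)] if_not_P[OF h(2)] if_P[OF h(3)] if_not_P[OF h(4)] if_P[OF True] if_not_P[OF F1]) (simp add: i5)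
      next
        case F2: False
        show ?thesis
        proof (cases "a + 1 \<le> n + i")
          case True
          have "C * A * Q powr (N + 1) - C * (Q powr (N + T + e) - Q powr (N + e) + Q ^ n * (Q powr e - Q))
             = C * (A * Q powr (N + 1)) - C * Q powr (N + T + e) + C * (Q^n * Q)"
          proof -
            have "Q ^ n * (Q powr e - Q) = Q powr (N + e) - Q ^ n * Q" using i3 by (simp add: right_diff_distrib)
            then show ?thesis by (rule alg1)
          qed
          also have "\<dots> = L" unfolding i1 i4 i6 by simp
          moreover have h: "\<not> (2*n-1-a < n-i)" "2*n-1-a < n" "a \<in> {n..<n+i}"
            using True F1 F2 assms(3,4) a by auto
          ultimately show ?thesis unfolding c v ni by (simp only: if_not_P[OF h(1)] if_P[OF h(2)] if_P[OF h(3)] if_P[OF True] if_not_P[OF F1] if_not_P[OF F2]) simp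
        next
          case False
          have "C * A * (Q powr (N + 1) - Q powr (real (n - i) + 1)) - C * (Q powr (N + T + e) - Q powr (N + e)) = 0"
          proof -
            have "C * A * (Q powr (N + 1) - Q powr (real (n - i) + 1)) - C * (Q powr (N + T + e) - Q powr (N + e))
              = C * (A * Q powr (N + 1)) - C * (A * Q powr (real (n - i) + 1)) - C * (Q powr (N + T + e) - Q powr (N + e))"
              by (simp add: algebra_simps)
            also have "\<dots> = 0" unfolding i1 i2 by (simp add: right_diff_distrib)
            finally show ?thesis .
          qed
          moreover have h: "2*n-1-a < n-i" "2*n-1-a < n" "a \<notin> {n..<n+i}"
            using False F1 F2 assms(3,4) a by auto
          ultimately show ?thesis unfolding c v ni by (simp only: if_P[OF h(1)] if_P[OF h(2)] if_not_P[OF h(3)] if_not_P[OF False] if_not_P[OF F1] if_not_P[OF F2]) simp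
        qed
      qed
    qed
  qed
  have "vvec n e Q i $ (n-1) = A"
  proof -
    have "n - 1 < 2*n" "\<not> (n - 1 + 1 \<le> n - i)" "n - 1 + 1 \<le> n" using assms(1,3,4) by auto
    then show ?thesis unfolding vvec_def A_def T_def Let_def by simp
  qed
  moreover have "A \<noteq> 0" unfolding A_def using Qp by simp
  ultimately have nz: "vvec n e Q i \<noteq> 0\<^sub>v (2*n)"
  proof -
    assume vA: "vvec n e Q i $ (n-1) = A" and An: "A \<noteq> 0"
    show ?thesis
  proof
    assume h: "vvec n e Q i = 0\<^sub>v (2*n)"
    have "n - 1 < 2*n" using assms(1) by simp
    then have "vvec n e Q i $ (n-1) = 0" unfolding h by simp
    then show False using vA An by simp
  qed
  qed
  have mv: "Qmat n e Q *\<^sub>v vvec n e Q i = (- L) \<cdot>\<^sub>v vvec n e Q i"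
  proof (rule eq_vecI)
    fix a assume "a < dim_vec ((- L) \<cdot>\<^sub>v vvec n e Q i)"
    hence a: "a < 2*n" using dimv by simp
    have "(Qmat n e Q *\<^sub>v vvec n e Q i) $ a = row (Qmat n e Q) a \<bullet> vvec n e Q i"
    proof -
      have "a < dim_row (Qmat n e Q)" using a dimQ(1) by (simp only:)
      then show ?thesis by (rule index_mult_mat_vec)
    qed
    also have "\<dots> = (\<Sum>b<2*n. Qmat n e Q $$ (a,b) * vvec n e Q i $ b)"
      unfolding scalar_prod_def dimv
    proof (rule sum.cong)
      show "{0..<2*n} = {..<2*n}" by auto
      fix b assume "b \<in> {..<2*n}"
      then have bc: "b < dim_col (Qmat n e Q)" using dimQ(2) by simp
      have ar: "a < dim_row (Qmat n e Q)" using a dimQ(1) by simp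
      then show "row (Qmat n e Q) a $ b * vvec n e Q i $ b = Qmat n e Q $$ (a,b) * vvec n e Q i $ b"
        by (simp only: index_row(1)[OF ar bc])
    qed
    also have "\<dots> = ((- L) \<cdot>\<^sub>v vvec n e Q i) $ a" using comp_eq[OF a] a dimv by simp
    finally show "(Qmat n e Q *\<^sub>v vvec n e Q i) $ a = ((- L) \<cdot>\<^sub>v vvec n e Q i) $ a" .
  qed (simp add: dimQ dimv)
  have cv: "vvec n e Q i \<in> carrier_vec (dim_row (Qmat n e Q))"
    unfolding dimQ(1) carrier_vec_def using dimv by (simp only: mem_Collect_eq)
  have ev: "eigenvector (Qmat n e Q) (vvec n e Q i) (- L)"
    unfolding eigenvector_def using cv nz mv unfolding dimQ(1) by (intro conjI)
  show ?thesis using ev unfolding L_def Q_def .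
qed

end
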